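(* Let $\mathbb{K}$ be $\mathbb{R}$ or $\mathbb{C}$. Let $U$ be a $2$-dimensional $\mathbb{K}$-vector space equipped with a chosen area form (nonzero alternating bilinear form) $\omega$, and let $SL(U)$ be the group of linear automorphisms of $U$ preserving $\omega$, acting on $U\otimes V^*$ via its action on the first factor and hence on $\bigwedge^4(U\otimes V^* )$. Then for every finite-dimensional $\mathbb{K}$-vector space $V$ there is an isomorphism, natural in $V$, $$\mathcal{R}(V)\;\simeq\;\Big(\textstyle\bigwedge^4(U\otimes V^* )\Big)^{SL(U)},$$ where the right-hand side denotes the subspace of $SL(U)$-invariant elements.
   Context: For a finite-dimensional vector space $V$, $\mathcal{R}(V)\subset (V^* )^{\otimes 4}$ denotes the subspace of tetralinear forms $R$ on $V$ satisfying, for all $a,b,c,d\in V$: (1) $R(a,b,c,d)=-R(b,a,c,d)=-R(a,b,d,c)$, and (2) $R(a,b,c,d)+R(b,c,a,d)+R(c,a,b,d)=0$ (the algebraic symmetries of a Riemann curvature tensor). *)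

theory Defs
  imports Complex_Main
begin

(* Coordinates: V = K^n with basis e_0..e_{n-1}, dual basis e^0..e^{n-1};
   U = K^2 with basis u_0,u_1; U (x) V^* has basis u_a (x) e^i, indexed by pairs (a,i).
   A 4-tensor is stored as its array of coefficients, required to vanish outside
   the index set. *)

type_synonym 'k t4 = "nat \<Rightarrow> nat \<Rightarrow> nat \<Rightarrow> nat \<Rightarrow> 'k"
type_synonym 'k w4 = "nat \<times> nat \<Rightarrow> nat \<times> nat \<Rightarrow> nat \<times> nat \<Rightarrow> nat \<times> nat \<Rightarrow> 'k"

definition supp4 :: "'i set \<Rightarrow> ('i \<Rightarrow> 'i \<Rightarrow> 'i \<Rightarrow> 'i \<Rightarrow> 'k::zero) \<Rightarrow> bool" where
  "supp4 I T \<longleftrightarrow> (\<forall>a b c d. \<not> (a \<in> I \<and> b \<in> I \<and> c \<in> I \<and> d \<in> I) \<longrightarrow> T a b c d = 0)"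

definition curv_space :: "nat \<Rightarrow> ('k::field) t4 set" where
  "curv_space n = {R. supp4 {..<n} R \<and>
     (\<forall>a b c d. R a b c d = - R b a c d \<and> R a b c d = - R a b d c \<and>
                R a b c d + R b c a d + R c a b d = 0)}"

text \<open>Lambda^4 W realised as the alternating (totally antisymmetric) 4-tensors in W^(x)4.\<close>
definition alt4 :: "('i \<Rightarrow> 'i \<Rightarrow> 'i \<Rightarrow> 'i \<Rightarrow> 'k::ab_group_add) \<Rightarrow> bool" where
  "alt4 T \<longleftrightarrow> (\<forall>x y z w. T x y z w = - T y x z w \<and> T x y z w = - T x z y w \<and>
                          T x y z w = - T x y w z)"

definition area_form :: "'k::field \<Rightarrow> (nat \<Rightarrow> 'k) \<Rightarrow> (nat \<Rightarrow> 'k) \<Rightarrow> 'k" where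
  "area_form c u v = c * (u 0 * v 1 - u 1 * v 0)"

definition mat2_vec :: "(nat \<Rightarrow> nat \<Rightarrow> 'k::field) \<Rightarrow> (nat \<Rightarrow> 'k) \<Rightarrow> nat \<Rightarrow> 'k" where
  "mat2_vec g u = (\<lambda>a. \<Sum>b<2. g a b * u b)"

definition SL_area :: "'k::field \<Rightarrow> (nat \<Rightarrow> nat \<Rightarrow> 'k) set" where
  "SL_area c = {g. (\<forall>a b. \<not> (a < 2 \<and> b < 2) \<longrightarrow> g a b = 0) \<and>
                   g 0 0 * g 1 1 - g 0 1 * g 1 0 \<noteq> 0 \<and>
                   (\<forall>u v. area_form c (mat2_vec g u) (mat2_vec g v) = area_form c u v)}"

definition act4 :: "(nat \<Rightarrow> nat \<Rightarrow> 'k::field) \<Rightarrow> 'k w4 \<Rightarrow> 'k w4" where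
  "act4 g T = (\<lambda>(a1,i1) (a2,i2) (a3,i3) (a4,i4).
     \<Sum>b1<2. \<Sum>b2<2. \<Sum>b3<2. \<Sum>b4<2.
       g a1 b1 * g a2 b2 * g a3 b3 * g a4 b4 * T (b1,i1) (b2,i2) (b3,i3) (b4,i4))"

definition inv_space :: "'k::field \<Rightarrow> nat \<Rightarrow> 'k w4 set" where
  "inv_space c n = {T. supp4 ({..<2} \<times> {..<n}) T \<and> alt4 T \<and>
                       (\<forall>g\<in>SL_area c. act4 g T = T)}"

text \<open>A linear map f : K^n \<rightarrow> K^m, as an m x n matrix F (F j i = coefficient of e_j in f e_i).\<close>
definition lin_mat :: "nat \<Rightarrow> nat \<Rightarrow> (nat \<Rightarrow> nat \<Rightarrow> 'k::zero) \<Rightarrow> bool" where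
  "lin_mat n m F \<longleftrightarrow> (\<forall>j i. \<not> (j < m \<and> i < n) \<longrightarrow> F j i = 0)"

definition pull_t4 :: "nat \<Rightarrow> (nat \<Rightarrow> nat \<Rightarrow> 'k::field) \<Rightarrow> 'k t4 \<Rightarrow> 'k t4" where
  "pull_t4 m F R = (\<lambda>i1 i2 i3 i4. \<Sum>j1<m. \<Sum>j2<m. \<Sum>j3<m. \<Sum>j4<m.
      F j1 i1 * F j2 i2 * F j3 i3 * F j4 i4 * R j1 j2 j3 j4)"

text \<open>Induced map (U (x) (K^m)^*)^(x)4 \<rightarrow> (U (x) (K^n)^*)^(x)4 from id (x) f^T.\<close>
definition pull_w4 :: "nat \<Rightarrow> (nat \<Rightarrow> nat \<Rightarrow> 'k::field) \<Rightarrow> 'k w4 \<Rightarrow> 'k w4" where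
  "pull_w4 m F T = (\<lambda>(a1,i1) (a2,i2) (a3,i3) (a4,i4).
     \<Sum>j1<m. \<Sum>j2<m. \<Sum>j3<m. \<Sum>j4<m.
       F j1 i1 * F j2 i2 * F j3 i3 * F j4 i4 * T (a1,j1) (a2,j2) (a3,j3) (a4,j4))"

definition natural_curvature_iso :: "'k::field \<Rightarrow> bool" where
  "natural_curvature_iso c \<longleftrightarrow>
    (\<exists>\<phi> :: nat \<Rightarrow> 'k t4 \<Rightarrow> 'k w4.
      (\<forall>n. bij_betw (\<phi> n) (curv_space n) (inv_space c n) \<and>
           (\<forall>R\<in>curv_space n. \<forall>S\<in>curv_space n.
              \<phi> n (\<lambda>a b d e. R a b d e + S a b d e) = (\<lambda>x y z w. \<phi> n R x y z w + \<phi> n S x y z w)) \<and>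
           (\<forall>s. \<forall>R\<in>curv_space n.
              \<phi> n (\<lambda>a b d e. s * R a b d e) = (\<lambda>x y z w. s * \<phi> n R x y z w))) \<and>
      (\<forall>n m F. lin_mat n m F \<longrightarrow>
         (\<forall>R\<in>curv_space m. \<phi> n (pull_t4 m F R) = pull_w4 m F (\<phi> m R))))"

end

theory Submission
  imports Defs
begin

lemma curv_a12: "R \<in> curv_space n \<Longrightarrow> R a b c d = - R b a c d"
  unfolding curv_space_def by blast
lemma curv_a34: "R \<in> curv_space n \<Longrightarrow> R a b c d = - R a b d c"
  unfolding curv_space_def by blast
lemma curv_bi: "R \<in> curv_space n \<Longrightarrow> R a b c d + R b c a d + R c a b d = 0"
  unfolding curv_space_def by blast

lemma two_diff_zero: fixes x y :: "'k::field_char_0" assumes "2 * (x - y) = 0" shows "x = y"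
proof -
  have "x - y = 0" using assms by (simp only: mult_eq_0_iff) simp
  then show ?thesis by (simp only: right_minus_eq)
qed

lemma curv_ps:
  fixes R :: "'k::field_char_0 t4"
  assumes "R \<in> curv_space n"
  shows "R a b c d = R c d a b"
proof -
  note A = curv_a12[OF assms] curv_a34[OF assms]
  have B1: "R a b c d + R b c a d + R c a b d = 0" by (rule curv_bi[OF assms])
  have B2: "R b c d a + R c d b a + R d b c a = 0" by (rule curv_bi[OF assms])
  have B3: "R c d a b + R d a c b + R a c d b = 0" by (rule curv_bi[OF assms])
  have B4: "R d a b c + R a b d c + R b d a c = 0" by (rule curv_bi[OF assms])
  have C2: "R b c d a + R c d b a + R d b c a = - R b c a d - R c d a b + R b d a c"
    by (simp add: curv_a34[OF assms, of b c d a] curv_a34[OF assms, of c d b a]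
      curv_a12[OF assms, of d b c a] curv_a34[OF assms, of b d c a])
  have C3: "R c d a b + R d a c b + R a c d b = R c d a b - R d a b c + R c a b d"
    by (simp add: curv_a34[OF assms, of d a c b] curv_a12[OF assms, of a c d b]
      curv_a34[OF assms, of c a d b])
  have C4: "R d a b c + R a b d c + R b d a c = R d a b c - R a b c d + R b d a c"
    by (simp add: curv_a34[OF assms, of a b d c])
  have "2 * (R a b c d - R c d a b) =
     (R a b c d + R b c a d + R c a b d) + (- R b c a d - R c d a b + R b d a c)
     - (R c d a b - R d a b c + R c a b d) - (R d a b c - R a b c d + R b d a c)"
    by algebra
  also have "\<dots> = 0"
  proof -
    have B2': "- R b c a d - R c d a b + R b d a c = 0" using B2 unfolding C2 .
    have B3': "R c d a b - R d a b c + R c a b d = 0" using B3 unfolding C3 .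
    have B4': "R d a b c - R a b c d + R b d a c = 0" using B4 unfolding C4 .
    show ?thesis by (simp only: B1 B2' B3' B4') simp
  qed
  finally have "2 * (R a b c d - R c d a b) = 0" .
  then show ?thesis by (rule two_diff_zero)
qed

lemma curv_bc:
  fixes R :: "'k::field_char_0 t4"
  assumes "R \<in> curv_space n"
  shows "R a d b c = R a c b d - R a b c d"
  using curv_bi[OF assms, of a b c d] curv_ps[OF assms, of b c a d]
    curv_a12[OF assms, of c a b d]
  by (simp add: algebra_simps eq_neg_iff_add_eq_0)

lemma nf1:
  fixes R :: "'k::field_char_0 t4"
  assumes "R \<in> curv_space n"
  shows "R p q s r = - R p q r s"
  by (simp add: curv_a34[OF assms, of p q s r])

lemma nf2:
  fixes R :: "'k::field_char_0 t4"
  assumes "R \<in> curv_space n"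
  shows "R p r s q = - R p r q s"
  by (simp add: curv_a34[OF assms, of p r s q])

lemma nf3:
  fixes R :: "'k::field_char_0 t4"
  assumes "R \<in> curv_space n"
  shows "R p s q r = (R p r q s - R p q r s)"
  by (simp add: curv_bc[OF assms, where a=p and b=q and c=r and d=s])

lemma nf4:
  fixes R :: "'k::field_char_0 t4"
  assumes "R \<in> curv_space n"
  shows "R p s r q = - (R p r q s - R p q r s)"
  by (simp add: curv_a34[OF assms, of p s r q] curv_bc[OF assms, where a=p and b=q and c=r and d=s])

lemma nf5:
  fixes R :: "'k::field_char_0 t4"
  assumes "R \<in> curv_space n"
  shows "R q p r s = - R p q r s"
  by (simp add: curv_a12[OF assms, of q p r s])

lemma nf6:
  fixes R :: "'k::field_char_0 t4"
  assumes "R \<in> curv_space n"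
  shows "R q p s r = R p q r s"
  by (simp add: curv_a12[OF assms, of q p s r] curv_a34[OF assms, of p q s r])

lemma nf7:
  fixes R :: "'k::field_char_0 t4"
  assumes "R \<in> curv_space n"
  shows "R q r p s = (R p r q s - R p q r s)"
  by (simp add: curv_ps[OF assms, of q r p s] curv_bc[OF assms, where a=p and b=q and c=r and d=s])

lemma nf8:
  fixes R :: "'k::field_char_0 t4"
  assumes "R \<in> curv_space n"
  shows "R q r s p = - (R p r q s - R p q r s)"
  by (simp add: curv_a34[OF assms, of q r s p] curv_ps[OF assms, of q r p s] curv_bc[OF assms, where a=p and b=q and c=r and d=s])

lemma nf9:
  fixes R :: "'k::field_char_0 t4"
  assumes "R \<in> curv_space n"
  shows "R q s p r = R p r q s"
  by (simp add: curv_ps[OF assms, of q s p r])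

lemma nf10:
  fixes R :: "'k::field_char_0 t4"
  assumes "R \<in> curv_space n"
  shows "R q s r p = - R p r q s"
  by (simp add: curv_a34[OF assms, of q s r p] curv_ps[OF assms, of q s p r])

lemma nf11:
  fixes R :: "'k::field_char_0 t4"
  assumes "R \<in> curv_space n"
  shows "R r p q s = - R p r q s"
  by (simp add: curv_a12[OF assms, of r p q s])

lemma nf12:
  fixes R :: "'k::field_char_0 t4"
  assumes "R \<in> curv_space n"
  shows "R r p s q = R p r q s"
  by (simp add: curv_a12[OF assms, of r p s q] curv_a34[OF assms, of p r s q])

lemma nf13:
  fixes R :: "'k::field_char_0 t4"
  assumes "R \<in> curv_space n"
  shows "R r q p s = - (R p r q s - R p q r s)"
  by (simp add: curv_a12[OF assms, of r q p s] curv_ps[OF assms, of q r p s] curv_bc[OF assms, where a=p and b=q and c=r and d=s])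

lemma nf14:
  fixes R :: "'k::field_char_0 t4"
  assumes "R \<in> curv_space n"
  shows "R r q s p = (R p r q s - R p q r s)"
  by (simp add: curv_a12[OF assms, of r q s p] curv_a34[OF assms, of q r s p] curv_ps[OF assms, of q r p s] curv_bc[OF assms, where a=p and b=q and c=r and d=s])

lemma nf15:
  fixes R :: "'k::field_char_0 t4"
  assumes "R \<in> curv_space n"
  shows "R r s p q = R p q r s"
  by (simp add: curv_ps[OF assms, of r s p q])

lemma nf16:
  fixes R :: "'k::field_char_0 t4"
  assumes "R \<in> curv_space n"
  shows "R r s q p = - R p q r s"
  by (simp add: curv_a34[OF assms, of r s q p] curv_ps[OF assms, of r s p q])

lemma nf17:
  fixes R :: "'k::field_char_0 t4"
  assumes "R \<in> curv_space n"
  shows "R s p q r = - (R p r q s - R p q r s)"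
  by (simp add: curv_a12[OF assms, of s p q r] curv_bc[OF assms, where a=p and b=q and c=r and d=s])

lemma nf18:
  fixes R :: "'k::field_char_0 t4"
  assumes "R \<in> curv_space n"
  shows "R s p r q = (R p r q s - R p q r s)"
  by (simp add: curv_a12[OF assms, of s p r q] curv_a34[OF assms, of p s r q] curv_bc[OF assms, where a=p and b=q and c=r and d=s])

lemma nf19:
  fixes R :: "'k::field_char_0 t4"
  assumes "R \<in> curv_space n"
  shows "R s q p r = - R p r q s"
  by (simp add: curv_a12[OF assms, of s q p r] curv_ps[OF assms, of q s p r])

lemma nf20:
  fixes R :: "'k::field_char_0 t4"
  assumes "R \<in> curv_space n"
  shows "R s q r p = R p r q s"
  by (simp add: curv_a12[OF assms, of s q r p] curv_a34[OF assms, of q s r p] curv_ps[OF assms, of q s p r])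

lemma nf21:
  fixes R :: "'k::field_char_0 t4"
  assumes "R \<in> curv_space n"
  shows "R s r p q = - R p q r s"
  by (simp add: curv_a12[OF assms, of s r p q] curv_ps[OF assms, of r s p q])

lemma nf22:
  fixes R :: "'k::field_char_0 t4"
  assumes "R \<in> curv_space n"
  shows "R s r q p = R p q r s"
  by (simp add: curv_a12[OF assms, of s r q p] curv_a34[OF assms, of r s q p] curv_ps[OF assms, of r s p q])

lemmas curv_nf = nf1 nf2 nf3 nf4 nf5 nf6 nf7 nf8 nf9 nf10 nf11 nf12 nf13 nf14 nf15 nf16 nf17 nf18 nf19 nf20 nf21 nf22

definition eps :: "nat \<Rightarrow> nat \<Rightarrow> 'k::field" where
  "eps a b = (if a = 0 \<and> b = 1 then 1 else if a = 1 \<and> b = 0 then -1 else 0)"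

definition phi :: "'k::field t4 \<Rightarrow> 'k w4" where
  "phi R = (\<lambda>(a1,i1) (a2,i2) (a3,i3) (a4,i4).
      eps a1 a3 * eps a2 a4 * R i1 i4 i3 i2 + eps a1 a4 * eps a2 a3 * R i1 i3 i2 i4)"

definition psi :: "'k::field w4 \<Rightarrow> 'k t4" where
  "psi T = (\<lambda>i j k l. T (0,i) (0,j) (1,k) (1,l))"

lemma phi_app:
  "phi R (a1,i1) (a2,i2) (a3,i3) (a4,i4) =
      eps a1 a3 * eps a2 a4 * R i1 i4 i3 i2 + eps a1 a4 * eps a2 a3 * R i1 i3 i2 i4"
  by (simp add: phi_def)

lemma eps_simps [simp]:
  "eps 0 1 = 1" "eps 1 0 = -1" "eps 0 0 = 0" "eps 1 1 = 0"
  "eps 0 (Suc 0) = 1" "eps (Suc 0) 0 = -1" "eps (Suc 0) (Suc 0) = 0"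
  by (simp_all add: eps_def)

lemma psi_phi:
  fixes R :: "'k::field_char_0 t4"
  assumes "R \<in> curv_space n"
  shows "psi (phi R) = R"
proof (intro ext)
  fix i j k l
  show "psi (phi R) i j k l = R i j k l"
    by (simp add: psi_def phi_app curv_nf[OF assms, where p=i and q=j and r=k and s=l])
qed

lemma eps_out: "a \<noteq> 0 \<Longrightarrow> a \<noteq> 1 \<Longrightarrow> eps a b = 0" "b \<noteq> 0 \<Longrightarrow> b \<noteq> 1 \<Longrightarrow> eps a b = 0"
  by (auto simp: eps_def)

lemma nat01: "(a::nat) = 0 \<or> a = 1 \<or> (a \<noteq> 0 \<and> a \<noteq> 1)" by auto

lemma pluecker:
  "(eps a1 a2 * eps a3 a4 :: 'k::field) = eps a1 a3 * eps a2 a4 - eps a1 a4 * eps a2 a3"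
  unfolding eps_def by simp

lemma phi_alt:
  fixes R :: "'k::field_char_0 t4"
  assumes "R \<in> curv_space n"
  shows "alt4 (phi R)"
  unfolding alt4_def
proof (intro allI)
  fix x y z w :: "nat \<times> nat"
  obtain a1 i1 where x: "x = (a1,i1)" by (cases x)
  obtain a2 i2 where y: "y = (a2,i2)" by (cases y)
  obtain a3 i3 where z: "z = (a3,i3)" by (cases z)
  obtain a4 i4 where w: "w = (a4,i4)" by (cases w)
  note N = curv_nf[OF assms, where p=i1 and q=i2 and r=i3 and s=i4]
  have e1: "eps a3 a2 = - (eps a2 a3 :: 'k)" "eps a4 a2 = - (eps a2 a4 :: 'k)" 
    "eps a4 a3 = - (eps a3 a4 :: 'k)" "eps a3 a1 = - (eps a1 a3 :: 'k)"
    "eps a2 a1 = - (eps a1 a2 :: 'k)" "eps a4 a1 = - (eps a1 a4 :: 'k)"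
    by (auto simp: eps_def)
  have "phi R x y z w = - phi R y x z w"
    unfolding x y z w phi_app by (simp add: N e1 algebra_simps)
  moreover have "phi R x y z w = - phi R x y w z"
    unfolding x y z w phi_app by (simp add: N e1 algebra_simps)
  moreover have "phi R x y z w = - phi R x z y w"
    unfolding x y z w phi_app by (simp add: N e1 pluecker[of a1 a2 a3 a4] algebra_simps)
  ultimately show "phi R x y z w = - phi R y x z w \<and> phi R x y z w = - phi R x z y w \<and>
        phi R x y z w = - phi R x y w z" by blast
qed


lemma sum2: "(\<Sum>b<2. f b) = f 0 + f (1::nat)"
  by (simp add: numeral_2_eq_2)

lemma act4_app:
  "act4 g T (a1,i1) (a2,i2) (a3,i3) (a4,i4) =
   (\<Sum>b1<2. \<Sum>b2<2. \<Sum>b3<2. \<Sum>b4<2.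
       g a1 b1 * g a2 b2 * g a3 b3 * g a4 b4 * T (b1,i1) (b2,i2) (b3,i3) (b4,i4))"
  by (simp add: act4_def)

lemma SL_supp: "g \<in> SL_area c \<Longrightarrow> \<not> (a < 2 \<and> b < 2) \<Longrightarrow> g a b = 0"
  unfolding SL_area_def by blast

lemma SL_det:
  fixes c :: "'k::field"
  assumes c: "c \<noteq> 0" and g: "g \<in> SL_area c"
  shows "g 0 0 * g 1 1 - g 0 1 * g 1 0 = 1"
proof -
  define u :: "nat \<Rightarrow> 'k" where "u = (\<lambda>a. if a = 0 then 1 else 0)"
  define v :: "nat \<Rightarrow> 'k" where "v = (\<lambda>a. if a = 1 then 1 else 0)"
  have "area_form c (mat2_vec g u) (mat2_vec g v) = area_form c u v"
    using g unfolding SL_area_def by blast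
  then have "c * (g 0 0 * g 1 1 - g 1 0 * g 0 1) = c * 1"
    by (simp add: area_form_def mat2_vec_def sum2 u_def v_def)
  then have "g 0 0 * g 1 1 - g 1 0 * g 0 1 = 1" using c by simp
  then show ?thesis by (simp add: mult.commute)
qed

lemma SL_D:
  fixes c :: "'k::field"
  assumes c: "c \<noteq> 0" and g: "g \<in> SL_area c"
  shows "g a 0 * g b 1 - g a 1 * g b 0 = eps a b"
proof -
  have d: "g 0 0 * g 1 1 - g 0 1 * g 1 0 = 1" by (rule SL_det[OF c g])
  consider "a = 0 \<and> b = 0" | "a = 0 \<and> b = 1" | "a = 1 \<and> b = 0" | "a = 1 \<and> b = 1"
    | "\<not> a < 2" | "\<not> b < 2" by linarith
  then show ?thesis
  proof cases
    case 1 then show ?thesis by (simp add: mult.commute)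
  next
    case 2 then show ?thesis using d by simp
  next
    case 3 then show ?thesis using d by (simp add: algebra_simps)
  next
    case 4 then show ?thesis by (simp add: mult.commute)
  next
    case 5 then show ?thesis using SL_supp[OF g, of a 0] SL_supp[OF g, of a 1]
      by (simp add: eps_def)
  next
    case 6 then show ?thesis using SL_supp[OF g, of b 0] SL_supp[OF g, of b 1]
      by (simp add: eps_def)
  qed
qed

lemma inv_calc:
  "(\<Sum>b1<2. \<Sum>b2<2. \<Sum>b3<2. \<Sum>b4<2. g a1 b1 * g a2 b2 * g a3 b3 * g a4 b4 *
      (eps b1 b3 * eps b2 b4 * X + eps b1 b4 * eps b2 b3 * Y)) =
   (g a1 0 * g a3 1 - g a1 1 * g a3 0) * (g a2 0 * g a4 1 - g a2 1 * g a4 0) * X +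
   (g a1 0 * g a4 1 - g a1 1 * g a4 0) * (g a2 0 * g a3 1 - g a2 1 * g a3 0) * (Y :: 'k::field)"
  by (simp add: sum2 algebra_simps)

lemma phi_inv:
  fixes c :: "'k::field"
  assumes c: "c \<noteq> 0" and g: "g \<in> SL_area c"
  shows "act4 g (phi R) = phi R"
proof (intro ext)
  fix x y z w :: "nat \<times> nat"
  obtain a1 i1 where x: "x = (a1,i1)" by (cases x)
  obtain a2 i2 where y: "y = (a2,i2)" by (cases y)
  obtain a3 i3 where z: "z = (a3,i3)" by (cases z)
  obtain a4 i4 where w: "w = (a4,i4)" by (cases w)
  show "act4 g (phi R) x y z w = phi R x y z w"
    unfolding x y z w act4_app phi_app inv_calc SL_D[OF c g] ..
qed

lemma phi_supp:
  fixes R :: "'k::field t4"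
  assumes "R \<in> curv_space n"
  shows "supp4 ({..<2} \<times> {..<n}) (phi R)"
  unfolding supp4_def
proof (intro allI impI)
  fix x y z w :: "nat \<times> nat"
  assume h: "\<not> (x \<in> {..<2} \<times> {..<n} \<and> y \<in> {..<2} \<times> {..<n} \<and> z \<in> {..<2} \<times> {..<n} \<and> w \<in> {..<2} \<times> {..<n})"
  obtain a1 i1 where x: "x = (a1,i1)" by (cases x)
  obtain a2 i2 where y: "y = (a2,i2)" by (cases y)
  obtain a3 i3 where z: "z = (a3,i3)" by (cases z)
  obtain a4 i4 where w: "w = (a4,i4)" by (cases w)
  have sR: "supp4 {..<n} R" using assms unfolding curv_space_def by blast
  have h': "\<not> (a1 < 2 \<and> a2 < 2 \<and> a3 < 2 \<and> a4 < 2) \<or> \<not> (i1 < n \<and> i2 < n \<and> i3 < n \<and> i4 < n)"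
    using h x y z w by auto
  then show "phi R x y z w = 0"
  proof
    assume "\<not> (a1 < 2 \<and> a2 < 2 \<and> a3 < 2 \<and> a4 < 2)"
    then have "eps a1 a3 * eps a2 a4 = (0::'k) \<and> eps a1 a4 * eps a2 a3 = (0::'k)"
      by (auto simp: eps_def)
    then show ?thesis unfolding x y z w phi_app by (metis add_0 mult_zero_left)
  next
    assume "\<not> (i1 < n \<and> i2 < n \<and> i3 < n \<and> i4 < n)"
    then have "R i1 i4 i3 i2 = 0 \<and> R i1 i3 i2 i4 = 0"
      using sR unfolding supp4_def by auto
    then show ?thesis unfolding x y z w phi_app by simp
  qed
qed

lemma phi_add:
  "phi (\<lambda>a b d e. R a b d e + S a b d e) = (\<lambda>x y z w. phi R x y z w + phi S x y z w)"
proof (intro ext)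
  fix x y z w :: "nat \<times> nat"
  show "phi (\<lambda>a b d e. R a b d e + S a b d e) x y z w = phi R x y z w + phi S x y z w"
    by (cases x; cases y; cases z; cases w) (simp add: phi_app algebra_simps)
qed

lemma phi_smult:
  "phi (\<lambda>a b d e. s * R a b d e) = (\<lambda>x y z w. s * phi R x y z w)"
proof (intro ext)
  fix x y z w :: "nat \<times> nat"
  show "phi (\<lambda>a b d e. s * R a b d e) x y z w = s * phi R x y z w"
    by (cases x; cases y; cases z; cases w) (simp add: phi_app algebra_simps)
qed

lemma swap24:
  "(\<Sum>x\<in>A. \<Sum>y\<in>A. \<Sum>z\<in>A. h x y z) = (\<Sum>x\<in>A. \<Sum>y\<in>A. \<Sum>z\<in>A. h z y x)"
proof -
  have "(\<Sum>x\<in>A. \<Sum>y\<in>A. \<Sum>z\<in>A. h x y z) = (\<Sum>x\<in>A. \<Sum>z\<in>A. \<Sum>y\<in>A. h x y z)"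
    by (rule sum.cong[OF refl], rule sum.swap)
  also have "\<dots> = (\<Sum>z\<in>A. \<Sum>x\<in>A. \<Sum>y\<in>A. h x y z)" by (rule sum.swap)
  also have "\<dots> = (\<Sum>z\<in>A. \<Sum>y\<in>A. \<Sum>x\<in>A. h x y z)"
    by (rule sum.cong[OF refl], rule sum.swap)
  finally show ?thesis .
qed

lemma pull_w4_app:
  "pull_w4 m F T (a1,i1) (a2,i2) (a3,i3) (a4,i4) =
     (\<Sum>j1<m. \<Sum>j2<m. \<Sum>j3<m. \<Sum>j4<m.
       F j1 i1 * F j2 i2 * F j3 i3 * F j4 i4 * T (a1,j1) (a2,j2) (a3,j3) (a4,j4))"
  by (simp add: pull_w4_def)

lemma phi_nat:
  fixes R :: "'k::field t4"
  shows "phi (pull_t4 m F R) = pull_w4 m F (phi R)"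
proof (intro ext)
  fix x y z w :: "nat \<times> nat"
  obtain a1 i1 where x: "x = (a1,i1)" by (cases x)
  obtain a2 i2 where y: "y = (a2,i2)" by (cases y)
  obtain a3 i3 where z: "z = (a3,i3)" by (cases z)
  obtain a4 i4 where w: "w = (a4,i4)" by (cases w)
  define e1 :: 'k where "e1 = eps a1 a3 * eps a2 a4"
  define e2 :: 'k where "e2 = eps a1 a4 * eps a2 a3"
  have S1: "(\<Sum>j1<m. \<Sum>j2<m. \<Sum>j3<m. \<Sum>j4<m.
       F j1 i1 * F j2 i2 * F j3 i3 * F j4 i4 * R j1 j4 j3 j2) = pull_t4 m F R i1 i4 i3 i2"
  proof -
    have "(\<Sum>j1<m. \<Sum>j2<m. \<Sum>j3<m. \<Sum>j4<m.
       F j1 i1 * F j2 i2 * F j3 i3 * F j4 i4 * R j1 j4 j3 j2) =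
       (\<Sum>j1<m. \<Sum>j2<m. \<Sum>j3<m. \<Sum>j4<m.
       F j1 i1 * F j4 i2 * F j3 i3 * F j2 i4 * R j1 j2 j3 j4)"
      by (rule sum.cong[OF refl], rule swap24)
    then show ?thesis by (simp add: pull_t4_def mult_ac)
  qed
  have S2: "(\<Sum>j1<m. \<Sum>j2<m. \<Sum>j3<m. \<Sum>j4<m.
       F j1 i1 * F j2 i2 * F j3 i3 * F j4 i4 * R j1 j3 j2 j4) = pull_t4 m F R i1 i3 i2 i4"
  proof -
    have "(\<Sum>j1<m. \<Sum>j2<m. \<Sum>j3<m. \<Sum>j4<m.
       F j1 i1 * F j2 i2 * F j3 i3 * F j4 i4 * R j1 j3 j2 j4) =
       (\<Sum>j1<m. \<Sum>j2<m. \<Sum>j3<m. \<Sum>j4<m.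
       F j1 i1 * F j3 i2 * F j2 i3 * F j4 i4 * R j1 j2 j3 j4)"
      by (rule sum.cong[OF refl], rule sum.swap)
    then show ?thesis by (simp add: pull_t4_def mult_ac)
  qed
  have "pull_w4 m F (phi R) x y z w =
     (\<Sum>j1<m. \<Sum>j2<m. \<Sum>j3<m. \<Sum>j4<m.
       F j1 i1 * F j2 i2 * F j3 i3 * F j4 i4 * (e1 * R j1 j4 j3 j2 + e2 * R j1 j3 j2 j4))"
    unfolding x y z w pull_w4_app phi_app e1_def e2_def ..
  also have "\<dots> = e1 * (\<Sum>j1<m. \<Sum>j2<m. \<Sum>j3<m. \<Sum>j4<m.
       F j1 i1 * F j2 i2 * F j3 i3 * F j4 i4 * R j1 j4 j3 j2) +
     e2 * (\<Sum>j1<m. \<Sum>j2<m. \<Sum>j3<m. \<Sum>j4<m.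
       F j1 i1 * F j2 i2 * F j3 i3 * F j4 i4 * R j1 j3 j2 j4)"
    by (simp add: sum.distrib sum_distrib_left algebra_simps)
  also have "\<dots> = phi (pull_t4 m F R) x y z w"
    unfolding S1 S2 x y z w phi_app e1_def e2_def ..
  finally show "phi (pull_t4 m F R) x y z w = pull_w4 m F (phi R) x y z w" by simp
qed


definition g2 :: "nat \<Rightarrow> nat \<Rightarrow> 'k::field" where
  "g2 a b = (if a = 0 \<and> b = 0 then 2 else if a = 1 \<and> b = 1 then 1/2 else 0)"

definition gu :: "nat \<Rightarrow> nat \<Rightarrow> 'k::field" where
  "gu a b = (if a = 0 \<and> b = 0 then 1 else if a = 0 \<and> b = 1 then 1 else if a = 1 \<and> b = 1 then 1 else 0)"

lemma g2_SL: "(g2 :: nat \<Rightarrow> nat \<Rightarrow> 'k::field_char_0) \<in> SL_area c"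
  unfolding SL_area_def
  by (auto simp: g2_def area_form_def mat2_vec_def sum2 algebra_simps)

lemma gu_SL: "(gu :: nat \<Rightarrow> nat \<Rightarrow> 'k::field_char_0) \<in> SL_area c"
  unfolding SL_area_def
  by (auto simp: gu_def area_form_def mat2_vec_def sum2 algebra_simps)

lemma inv_char:
  fixes T :: "'k::field_char_0 w4" and c :: 'k
  assumes T: "T \<in> inv_space c n"
  shows "psi T \<in> curv_space n \<and> phi (psi T) = T"
proof -
  have sT: "supp4 ({..<2} \<times> {..<n}) T" and aT: "alt4 T" and iT: "\<forall>g\<in>SL_area c. act4 g T = T"
    using T unfolding inv_space_def by auto
  have al12: "\<And>x y z w. T x y z w = - T y x z w" using aT unfolding alt4_def by blast
  have al23: "\<And>x y z w. T x y z w = - T x z y w" using aT unfolding alt4_def by blast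
  have al34: "\<And>x y z w. T x y z w = - T x y w z" using aT unfolding alt4_def by blast
  have A2: "act4 g2 T = T" using iT g2_SL by blast
  have Au: "act4 gu T = T" using iT gu_SL by blast
  have W0: "\<And>i1 i2 i3 i4. T (0,i1) (0,i2) (0,i3) (0,i4) = 0"
  proof -
    fix i1 i2 i3 i4
    have "act4 g2 T (0,i1) (0,i2) (0,i3) (0,i4) = T (0,i1) (0,i2) (0,i3) (0,i4)" by (simp only: A2)
    then show "T (0,i1) (0,i2) (0,i3) (0,i4) = 0" by (simp add: act4_app sum2 g2_def)
  qed
  have W1: "\<And>i1 i2 i3 i4. T (0,i1) (0,i2) (0,i3) (1,i4) = 0"
  proof -
    fix i1 i2 i3 i4
    have "act4 g2 T (0,i1) (0,i2) (0,i3) (1,i4) = T (0,i1) (0,i2) (0,i3) (1,i4)" by (simp only: A2)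
    then show "T (0,i1) (0,i2) (0,i3) (1,i4) = 0" by (simp add: act4_app sum2 g2_def)
  qed
  have W2: "\<And>i1 i2 i3 i4. T (0,i1) (0,i2) (1,i3) (0,i4) = 0"
  proof -
    fix i1 i2 i3 i4
    have "act4 g2 T (0,i1) (0,i2) (1,i3) (0,i4) = T (0,i1) (0,i2) (1,i3) (0,i4)" by (simp only: A2)
    then show "T (0,i1) (0,i2) (1,i3) (0,i4) = 0" by (simp add: act4_app sum2 g2_def)
  qed
  have W3: "\<And>i1 i2 i3 i4. T (0,i1) (1,i2) (0,i3) (0,i4) = 0"
  proof -
    fix i1 i2 i3 i4
    have "act4 g2 T (0,i1) (1,i2) (0,i3) (0,i4) = T (0,i1) (1,i2) (0,i3) (0,i4)" by (simp only: A2)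
    then show "T (0,i1) (1,i2) (0,i3) (0,i4) = 0" by (simp add: act4_app sum2 g2_def)
  qed
  have W4: "\<And>i1 i2 i3 i4. T (0,i1) (1,i2) (1,i3) (1,i4) = 0"
  proof -
    fix i1 i2 i3 i4
    have "act4 g2 T (0,i1) (1,i2) (1,i3) (1,i4) = T (0,i1) (1,i2) (1,i3) (1,i4)" by (simp only: A2)
    then show "T (0,i1) (1,i2) (1,i3) (1,i4) = 0" by (simp add: act4_app sum2 g2_def)
  qed
  have W5: "\<And>i1 i2 i3 i4. T (1,i1) (0,i2) (0,i3) (0,i4) = 0"
  proof -
    fix i1 i2 i3 i4
    have "act4 g2 T (1,i1) (0,i2) (0,i3) (0,i4) = T (1,i1) (0,i2) (0,i3) (0,i4)" by (simp only: A2)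
    then show "T (1,i1) (0,i2) (0,i3) (0,i4) = 0" by (simp add: act4_app sum2 g2_def)
  qed
  have W6: "\<And>i1 i2 i3 i4. T (1,i1) (0,i2) (1,i3) (1,i4) = 0"
  proof -
    fix i1 i2 i3 i4
    have "act4 g2 T (1,i1) (0,i2) (1,i3) (1,i4) = T (1,i1) (0,i2) (1,i3) (1,i4)" by (simp only: A2)
    then show "T (1,i1) (0,i2) (1,i3) (1,i4) = 0" by (simp add: act4_app sum2 g2_def)
  qed
  have W7: "\<And>i1 i2 i3 i4. T (1,i1) (1,i2) (0,i3) (1,i4) = 0"
  proof -
    fix i1 i2 i3 i4
    have "act4 g2 T (1,i1) (1,i2) (0,i3) (1,i4) = T (1,i1) (1,i2) (0,i3) (1,i4)" by (simp only: A2)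
    then show "T (1,i1) (1,i2) (0,i3) (1,i4) = 0" by (simp add: act4_app sum2 g2_def)
  qed
  have W8: "\<And>i1 i2 i3 i4. T (1,i1) (1,i2) (1,i3) (0,i4) = 0"
  proof -
    fix i1 i2 i3 i4
    have "act4 g2 T (1,i1) (1,i2) (1,i3) (0,i4) = T (1,i1) (1,i2) (1,i3) (0,i4)" by (simp only: A2)
    then show "T (1,i1) (1,i2) (1,i3) (0,i4) = 0" by (simp add: act4_app sum2 g2_def)
  qed
  have W9: "\<And>i1 i2 i3 i4. T (1,i1) (1,i2) (1,i3) (1,i4) = 0"
  proof -
    fix i1 i2 i3 i4
    have "act4 g2 T (1,i1) (1,i2) (1,i3) (1,i4) = T (1,i1) (1,i2) (1,i3) (1,i4)" by (simp only: A2)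
    then show "T (1,i1) (1,i2) (1,i3) (1,i4) = 0" by (simp add: act4_app sum2 g2_def)
  qed
  note W = W0 W1 W2 W3 W4 W5 W6 W7 W8 W9

  define Q where "Q = psi T"
  have Qc: "Q \<in> curv_space n"
    unfolding curv_space_def
  proof (intro CollectI conjI allI)
    show "supp4 {..<n} Q"
      unfolding supp4_def
    proof (intro allI impI)
      fix i j k l
      assume "\<not> (i \<in> {..<n} \<and> j \<in> {..<n} \<and> k \<in> {..<n} \<and> l \<in> {..<n})"
      then have "\<not> ((0::nat,i) \<in> {..<2} \<times> {..<n} \<and> (0::nat,j) \<in> {..<2} \<times> {..<n} \<and>
          (1::nat,k) \<in> {..<2} \<times> {..<n} \<and> (1::nat,l) \<in> {..<2} \<times> {..<n})" by auto
      then show "Q i j k l = 0" using sT unfolding supp4_def Q_def psi_def by blast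
    qed
  next
    fix i j k l
    show "Q i j k l = - Q j i k l" unfolding Q_def psi_def by (rule al12)
    show "Q i j k l = - Q i j l k" unfolding Q_def psi_def by (rule al34)
    have "act4 gu T (0,i) (0,j) (0,k) (Suc 0,l) = T (0,i) (0,j) (0,k) (Suc 0,l)" by (simp only: Au)
    then have E: "T (Suc 0,i) (0,j) (0,k) (Suc 0,l) + T (0,i) (Suc 0,j) (0,k) (Suc 0,l) + T (0,i) (0,j) (Suc 0,k) (Suc 0,l) = 0"
      by (simp add: act4_app sum2 gu_def W[unfolded One_nat_def] algebra_simps)
    have b1: "T (Suc 0,i) (0,j) (0,k) (Suc 0,l) = psi T j k i l" by (simp add: psi_def al12[of "(Suc 0,i)" "(0,j)" "(0,k)" "(Suc 0,l)"] al23[of "(0,j)" "(Suc 0,i)" "(0,k)" "(Suc 0,l)"])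
    have b2: "T (0,i) (Suc 0,j) (0,k) (Suc 0,l) = - psi T i k j l" by (simp add: psi_def al23[of "(0,i)" "(Suc 0,j)" "(0,k)" "(Suc 0,l)"])
    have b3: "T (0,i) (0,j) (Suc 0,k) (Suc 0,l) = psi T i j k l" by (simp add: psi_def)
    have b4: "psi T k i j l = - psi T i k j l" unfolding psi_def by (rule al12)
    have E': "psi T j k i l + - psi T i k j l + psi T i j k l = 0" using E unfolding b1 b2 b3 .
    show "Q i j k l + Q j k i l + Q k i j l = 0" unfolding Q_def b4 using E'
      by (simp add: algebra_simps)
  qed
  have eq: "phi Q = T"
  proof (intro ext)
    fix x y z w :: "nat \<times> nat"
    obtain a1 i1 where x: "x = (a1,i1)" by (cases x)
    obtain a2 i2 where y: "y = (a2,i2)" by (cases y)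
    obtain a3 i3 where z: "z = (a3,i3)" by (cases z)
    obtain a4 i4 where w: "w = (a4,i4)" by (cases w)
    note N = curv_nf[OF Qc, where p=i1 and q=i2 and r=i3 and s=i4]
    have C0: "T (0,i1) (0,i2) (0,i3) (0,i4) = phi Q (0,i1) (0,i2) (0,i3) (0,i4)"
      by (simp add: W W[unfolded One_nat_def] phi_app)
    have C1: "T (0,i1) (0,i2) (0,i3) (1,i4) = phi Q (0,i1) (0,i2) (0,i3) (1,i4)"
      by (simp add: W W[unfolded One_nat_def] phi_app)
    have C2: "T (0,i1) (0,i2) (1,i3) (0,i4) = phi Q (0,i1) (0,i2) (1,i3) (0,i4)"
      by (simp add: W W[unfolded One_nat_def] phi_app)
    have C3: "T (0,i1) (0,i2) (1,i3) (1,i4) = phi Q (0,i1) (0,i2) (1,i3) (1,i4)"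
    proof -
      have "T (0,i1) (0,i2) (1,i3) (1,i4) = Q i1 i2 i3 i4" by (simp add: Q_def psi_def )
      then show ?thesis by (simp add: phi_app N)
    qed
    have C4: "T (0,i1) (1,i2) (0,i3) (0,i4) = phi Q (0,i1) (1,i2) (0,i3) (0,i4)"
      by (simp add: W W[unfolded One_nat_def] phi_app)
    have C5: "T (0,i1) (1,i2) (0,i3) (1,i4) = phi Q (0,i1) (1,i2) (0,i3) (1,i4)"
    proof -
      have "T (0,i1) (1,i2) (0,i3) (1,i4) = - Q i1 i3 i2 i4" by (simp add: Q_def psi_def al23[of "(0,i1)" "(1,i2)" "(0,i3)" "(1,i4)", unfolded One_nat_def])
      then show ?thesis by (simp add: phi_app N)
    qed
    have C6: "T (0,i1) (1,i2) (1,i3) (0,i4) = phi Q (0,i1) (1,i2) (1,i3) (0,i4)"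
    proof -
      have "T (0,i1) (1,i2) (1,i3) (0,i4) = Q i1 i4 i2 i3" by (simp add: Q_def psi_def al34[of "(0,i1)" "(1,i2)" "(1,i3)" "(0,i4)", unfolded One_nat_def] al23[of "(0,i1)" "(1,i2)" "(0,i4)" "(1,i3)", unfolded One_nat_def])
      then show ?thesis by (simp add: phi_app N)
    qed
    have C7: "T (0,i1) (1,i2) (1,i3) (1,i4) = phi Q (0,i1) (1,i2) (1,i3) (1,i4)"
      by (simp add: W W[unfolded One_nat_def] phi_app)
    have C8: "T (1,i1) (0,i2) (0,i3) (0,i4) = phi Q (1,i1) (0,i2) (0,i3) (0,i4)"
      by (simp add: W W[unfolded One_nat_def] phi_app)
    have C9: "T (1,i1) (0,i2) (0,i3) (1,i4) = phi Q (1,i1) (0,i2) (0,i3) (1,i4)"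
    proof -
      have "T (1,i1) (0,i2) (0,i3) (1,i4) = Q i2 i3 i1 i4" by (simp add: Q_def psi_def al12[of "(1,i1)" "(0,i2)" "(0,i3)" "(1,i4)", unfolded One_nat_def] al23[of "(0,i2)" "(1,i1)" "(0,i3)" "(1,i4)", unfolded One_nat_def])
      then show ?thesis by (simp add: phi_app N)
    qed
    have C10: "T (1,i1) (0,i2) (1,i3) (0,i4) = phi Q (1,i1) (0,i2) (1,i3) (0,i4)"
    proof -
      have "T (1,i1) (0,i2) (1,i3) (0,i4) = - Q i2 i4 i1 i3" by (simp add: Q_def psi_def al12[of "(1,i1)" "(0,i2)" "(1,i3)" "(0,i4)", unfolded One_nat_def] al34[of "(0,i2)" "(1,i1)" "(1,i3)" "(0,i4)", unfolded One_nat_def] al23[of "(0,i2)" "(1,i1)" "(0,i4)" "(1,i3)", unfolded One_nat_def])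
      then show ?thesis by (simp add: phi_app N)
    qed
    have C11: "T (1,i1) (0,i2) (1,i3) (1,i4) = phi Q (1,i1) (0,i2) (1,i3) (1,i4)"
      by (simp add: W W[unfolded One_nat_def] phi_app)
    have C12: "T (1,i1) (1,i2) (0,i3) (0,i4) = phi Q (1,i1) (1,i2) (0,i3) (0,i4)"
    proof -
      have "T (1,i1) (1,i2) (0,i3) (0,i4) = Q i3 i4 i1 i2" by (simp add: Q_def psi_def al23[of "(1,i1)" "(1,i2)" "(0,i3)" "(0,i4)", unfolded One_nat_def] al34[of "(1,i1)" "(0,i3)" "(1,i2)" "(0,i4)", unfolded One_nat_def] al12[of "(1,i1)" "(0,i3)" "(0,i4)" "(1,i2)", unfolded One_nat_def] al23[of "(0,i3)" "(1,i1)" "(0,i4)" "(1,i2)", unfolded One_nat_def])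
      then show ?thesis by (simp add: phi_app N)
    qed
    have C13: "T (1,i1) (1,i2) (0,i3) (1,i4) = phi Q (1,i1) (1,i2) (0,i3) (1,i4)"
      by (simp add: W W[unfolded One_nat_def] phi_app)
    have C14: "T (1,i1) (1,i2) (1,i3) (0,i4) = phi Q (1,i1) (1,i2) (1,i3) (0,i4)"
      by (simp add: W W[unfolded One_nat_def] phi_app)
    have C15: "T (1,i1) (1,i2) (1,i3) (1,i4) = phi Q (1,i1) (1,i2) (1,i3) (1,i4)"
      by (simp add: W W[unfolded One_nat_def] phi_app)
    show "phi Q x y z w = T x y z w"
    proof (cases "a1 < 2 \<and> a2 < 2 \<and> a3 < 2 \<and> a4 < 2 \<and> i1 < n \<and> i2 < n \<and> i3 < n \<and> i4 < n")
      case True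
      then have "a1 = 0 \<or> a1 = 1" "a2 = 0 \<or> a2 = 1" "a3 = 0 \<or> a3 = 1" "a4 = 0 \<or> a4 = 1" by auto
      then show ?thesis unfolding x y z w
        by (elim disjE) (simp_all only: C0 C1 C2 C3 C4 C5 C6 C7 C8 C9 C10 C11 C12 C13 C14 C15)
    next
      case False
      then have "T x y z w = 0" using sT unfolding supp4_def x y z w by auto
      moreover have "phi Q x y z w = 0" using phi_supp[OF Qc] False unfolding supp4_def x y z w by auto
      ultimately show ?thesis by simp
    qed
  qed
  show ?thesis using Qc eq unfolding Q_def by simp
qed


lemma phi_in_inv:
  fixes R :: "'k::field_char_0 t4" and c :: 'k
  assumes c: "c \<noteq> 0" and R: "R \<in> curv_space n"
  shows "phi R \<in> inv_space c n"
  unfolding inv_space_def using phi_supp[OF R] phi_alt[OF R] phi_inv[OF c] by blast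

lemma main_iso:
  fixes c :: "'k::field_char_0"
  assumes c: "c \<noteq> 0"
  shows "natural_curvature_iso c"
proof -
  have B: "bij_betw phi (curv_space n) (inv_space c n)" for n
  proof (rule bij_betw_byWitness[where f'="psi :: 'k w4 \<Rightarrow> 'k t4"])
    show "\<forall>a\<in>(curv_space n :: 'k t4 set). psi (phi a) = a"
    proof
      fix R :: "'k t4" assume "R \<in> curv_space n" then show "psi (phi R) = R" by (rule psi_phi)
    qed
    show "\<forall>a'\<in>inv_space c n. phi (psi a') = a'"
    proof
      fix T :: "'k w4" assume "T \<in> inv_space c n" then show "phi (psi T) = T" using inv_char by metis
    qed
    show "phi ` curv_space n \<subseteq> inv_space c n"
    proof
      fix T :: "'k w4" assume "T \<in> phi ` curv_space n"
      then obtain R where "R \<in> curv_space n" "T = phi R" by blast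
      then show "T \<in> inv_space c n" using phi_in_inv[OF c] by simp
    qed
    show "psi ` inv_space c n \<subseteq> curv_space n"
    proof
      fix R :: "'k t4" assume "R \<in> psi ` inv_space c n"
      then obtain T where "T \<in> inv_space c n" "R = psi T" by blast
      then show "R \<in> curv_space n" using inv_char by metis
    qed
  qed
  show ?thesis unfolding natural_curvature_iso_def
    by (intro exI[of _ "\<lambda>n. phi"] conjI allI ballI impI B phi_add phi_smult phi_nat)
qed

theorem proposition1:
  shows "(\<forall>c::real. c \<noteq> 0 \<longrightarrow> natural_curvature_iso c) \<and>
         (\<forall>c::complex. c \<noteq> 0 \<longrightarrow> natural_curvature_iso c)"
proof
  show "\<forall>c::real. c \<noteq> 0 \<longrightarrow> natural_curvature_iso c" using main_iso by blast
  show "\<forall>c::complex. c \<noteq> 0 \<longrightarrow> natural_curvature_iso c" using main_iso by blast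
qed

end
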